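(* Let $X$ be an uncountable Polish space. Then \[ \mathscr{L}_X(\mathrm{FS})=\mathscr{L}_X(\mathcal{H})=\Sigma^1_1(X), \] where $\Sigma^1_1(X)$ is the family of all analytic subsets of $X$. Moreover, for every nonempty analytic set $C\subseteq X$ there exists a sequence $y=(y_n)_{n\in\omega}\in X^\omega$ such that $C=\Lambda_y(\mathrm{FS})=\Lambda_y(\mathcal{H})$.
   Context: $\omega$ denotes the set of nonnegative integers. For infinite $D\subseteq\omega$, $\mathrm{FS}(D)=\{\sum_{n\in\alpha}n:\alpha\subseteq D\text{ finite nonempty}\}$. A set $S\subseteq\omega$ is an IP-set if $\mathrm{FS}(D)\subseteq S$ for some infinite $D\subseteq\omega$. The Hindman ideal is $\mathcal{H}=\{S\subseteq\omega: S\text{ is not an IP-set}\}$. For a sequence $y:\omega\to X$ in a topological space $X$: $\eta\in X$ is an $\mathrm{FS}$-limit (IP-limit) point of $y$ if there is an infinite $D\subseteq\omega$ such that for every neighborhood $U$ of $\eta$ there is a finite $K\subseteq\omega$ with $y_n\in U$ for all $n\in\mathrm{FS}(D\setminus K)$; $\Lambda_y(\mathrm{FS})$ is the set of such points. $\eta$ is an $\mathcal{H}$-limit point of $y$ if there is $E\subseteq\omega$ with $E\notin\mathcal{H}$ such that the subsequence $(y_n)_{n\in E}$ converges to $\eta$ in the ordinary sense; $\Lambda_y(\mathcal{H})$ is the set of such points. $\mathscr{L}_X(\mathrm{FS})=\{A\subseteq X:\exists y\in X^{\omega}\ A=\Lambda_y(\mathrm{FS})\}\cup\{\emptyset\}$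 and $\mathscr{L}_X(\mathcal{H})=\{A\subseteq X:\exists y\in X^{\omega}\ A=\Lambda_y(\mathcal{H})\}\cup\{\emptyset\}$. *)

theory Defs
  imports "HOL-Analysis.Analysis"
begin

definition FS :: "nat set \<Rightarrow> nat set" where
  "FS D = {\<Sum>\<alpha> | \<alpha>. \<alpha> \<subseteq> D \<and> finite \<alpha> \<and> \<alpha> \<noteq> {}}"

definition IP_set :: "nat set \<Rightarrow> bool" where
  "IP_set S \<longleftrightarrow> (\<exists>D. infinite D \<and> FS D \<subseteq> S)"

definition Hindman_ideal :: "nat set set" where
  "Hindman_ideal = {S. \<not> IP_set S}"

definition FS_limits :: "(nat \<Rightarrow> 'a::topological_space) \<Rightarrow> 'a set" where
  "FS_limits y = {\<eta>. \<exists>D. infinite D \<and>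
      (\<forall>U. open U \<and> \<eta> \<in> U \<longrightarrow> (\<exists>K. finite K \<and> (\<forall>n \<in> FS (D - K). y n \<in> U)))}"

definition H_limits :: "(nat \<Rightarrow> 'a::topological_space) \<Rightarrow> 'a set" where
  "H_limits y = {\<eta>. \<exists>E. E \<notin> Hindman_ideal \<and>
      (\<forall>U. open U \<and> \<eta> \<in> U \<longrightarrow> finite {n \<in> E. y n \<notin> U})}"

definition L_FS :: "'a::topological_space set set" where
  "L_FS = {A. \<exists>y :: nat \<Rightarrow> 'a. A = FS_limits y} \<union> {{}}"

definition L_H :: "'a::topological_space set set" where
  "L_H = {A. \<exists>y :: nat \<Rightarrow> 'a. A = H_limits y} \<union> {{}}"

text \<open>Analytic sets: empty, or a continuous image of the Baire space \<omega>^\<omega>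
  (nat \<Rightarrow> nat with the product topology of discrete copies of nat).\<close>
definition analytic_set :: "'a::topological_space set \<Rightarrow> bool" where
  "analytic_set A \<longleftrightarrow> A = {} \<or>
     (\<exists>f :: (nat \<Rightarrow> nat) \<Rightarrow> 'a. continuous_on UNIV f \<and> f ` UNIV = A)"

definition Sigma11 :: "'a::topological_space set set" where
  "Sigma11 = {A. analytic_set A}"

end

theory Submission
  imports Defs "HOL-Library.Nat_Bijection"
begin


definition agree :: "(nat \<Rightarrow> nat) \<Rightarrow> (nat \<Rightarrow> nat) \<Rightarrow> nat \<Rightarrow> bool" where
  "agree p q N \<longleftrightarrow> (\<forall>i<N. p i = q i)"

lemma agree_sym: "agree p q N \<Longrightarrow> agree q p N"
  by (auto simp: agree_def)

lemma agree_mono: "agree p q N \<Longrightarrow> M \<le> N \<Longrightarrow> agree p q M"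
  by (auto simp: agree_def)

lemma cyl_open: "open {z::nat\<Rightarrow>nat. agree z x N}"
proof -
  have "{z::nat\<Rightarrow>nat. agree z x N} = (\<Inter>i\<in>{..<N}. (\<lambda>z. z i) -` {x i})"
    by (auto simp: agree_def)
  moreover have "open ((\<lambda>z::nat\<Rightarrow>nat. z i) -` {x i})" for i
    using continuous_on_open_vimage[OF open_UNIV, of "\<lambda>z::nat\<Rightarrow>nat. z i"]
    by (simp add: open_discrete)
  ultimately show ?thesis by auto
qed

lemma open_cyl:
  assumes "open (U::(nat\<Rightarrow>nat) set)" "x \<in> U"
  shows "\<exists>N. \<forall>z. agree z x N \<longrightarrow> z \<in> U"
proof -
  have *: "openin (product_topology (\<lambda>i. euclidean) UNIV) U"
    using open_fun_def assms by auto
  obtain X where H: "Pi\<^sub>E UNIV X \<subseteq> U" "finite {i. X i \<noteq> topspace euclidean}"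
     "x \<in> Pi\<^sub>E UNIV X"
    using product_topology_open_contains_basis[OF * \<open>x \<in> U\<close>] by auto
  define I where "I = {i. X i \<noteq> topspace euclidean}"
  have fI: "finite I" using H(2) I_def by auto
  define N where "N = Suc (\<Sum>I)"
  have "z \<in> U" if "agree z x N" for z
  proof -
    have "z i \<in> X i" for i
    proof (cases "i \<in> I")
      case True
      then have "i \<le> \<Sum>I" using fI by (metis sum.remove le_add1)
      then have "z i = x i" using that by (auto simp: agree_def N_def)
      then show ?thesis using H(3) by auto
    next
      case False
      then show ?thesis by (auto simp: I_def)
    qed
    then show ?thesis using H(1) by auto
  qed
  then show ?thesis by blast
qed

lemma continuous_on_cyl:
  fixes h :: "(nat \<Rightarrow> nat) \<Rightarrow> 'b::topological_space"
  assumes "\<And>x V. x \<in> S \<Longrightarrow> open V \<Longrightarrow> h x \<in> V \<Longrightarrow> \<exists>N. \<forall>z\<in>S. agree z x N \<longrightarrow> h z \<in> V"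
  shows "continuous_on S h"
  unfolding continuous_on_open_invariant
proof (intro allI impI)
  fix V :: "'b set" assume V: "open V"
  have "\<forall>x\<in>S \<inter> h -` V. \<exists>N. \<forall>z\<in>S. agree z x N \<longrightarrow> h z \<in> V"
    using assms V by blast
  then obtain Nf where Nf: "\<And>x. x \<in> S \<inter> h -` V \<Longrightarrow> \<forall>z\<in>S. agree z x (Nf x) \<longrightarrow> h z \<in> V"
    by metis
  define A where "A = (\<Union>x\<in>S \<inter> h -` V. {z. agree z x (Nf x)})"
  have "open A" unfolding A_def using cyl_open by auto
  moreover have "A \<inter> S = h -` V \<inter> S"
    using Nf by (auto simp: A_def agree_def)
  ultimately show "\<exists>A. open A \<and> A \<inter> S = h -` V \<inter> S" by blast
qed

lemma continuous_on_cyl_metric: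
  fixes h :: "(nat \<Rightarrow> nat) \<Rightarrow> 'b::metric_space"
  assumes "\<And>x e. x \<in> S \<Longrightarrow> e > 0 \<Longrightarrow> \<exists>N. \<forall>z\<in>S. agree z x N \<longrightarrow> dist (h z) (h x) < e"
  shows "continuous_on S h"
proof (rule continuous_on_cyl)
  fix x V assume "x \<in> S" "open V" "h x \<in> V"
  then obtain e where "e > 0" "ball (h x) e \<subseteq> V" by (meson open_contains_ball)
  then obtain N where "\<forall>z\<in>S. agree z x N \<longrightarrow> dist (h z) (h x) < e" using assms \<open>x \<in> S\<close> by blast
  then show "\<exists>N. \<forall>z\<in>S. agree z x N \<longrightarrow> h z \<in> V"
    using \<open>ball (h x) e \<subseteq> V\<close> by (auto simp: dist_commute subset_iff)
qed

lemma continuous_cyl: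
  fixes f :: "(nat \<Rightarrow> nat) \<Rightarrow> 'b::topological_space"
  assumes "continuous_on UNIV f" "open V" "f x \<in> V"
  shows "\<exists>N. \<forall>z. agree z x N \<longrightarrow> f z \<in> V"
proof -
  have "open (f -` V)" using continuous_on_open_vimage[OF open_UNIV] assms by auto
  then show ?thesis using open_cyl[of "f -` V" x] assms by auto
qed

lemma closed_cyl:
  assumes "closed (F::(nat\<Rightarrow>nat) set)" "\<And>N. \<exists>z\<in>F. agree z x N"
  shows "x \<in> F"
proof (rule ccontr)
  assume "x \<notin> F"
  then obtain N where "\<forall>z. agree z x N \<longrightarrow> z \<in> - F"
    using open_cyl[of "-F" x] assms(1) by (auto simp: closed_def)
  then show False using assms(2)[of N] by (auto dest: agree_sym)
qed

lemma closed_local: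
  assumes "\<And>j p. \<exists>N. \<forall>q. agree q p N \<longrightarrow> (P j q \<longleftrightarrow> P j p)"
  shows "closed {p::nat\<Rightarrow>nat. \<forall>j. P j p}"
  unfolding closed_def
proof (rule Topological_Spaces.openI)
  fix x assume "x \<in> - {p. \<forall>j. P j p}"
  then obtain j where "\<not> P j x" by auto
  then obtain N where "\<forall>q. agree q x N \<longrightarrow> \<not> P j q" using assms by blast
  then show "\<exists>T. open T \<and> x \<in> T \<and> T \<subseteq> - {p. \<forall>j. P j p}"
    using cyl_open[of x N] by (intro exI[of _ "{z. agree z x N}"]) (auto simp: agree_def)
qed



definition TT :: "(nat \<Rightarrow> nat) set \<Rightarrow> nat list set" where
  "TT F = {s. \<exists>z\<in>F. \<forall>i<length s. z i = s!i}"

primrec rl :: "(nat \<Rightarrow> nat) set \<Rightarrow> (nat \<Rightarrow> nat) \<Rightarrow> nat \<Rightarrow> nat list" where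
  "rl F x 0 = []"
| "rl F x (Suc n) = (if rl F x n @ [x n] \<in> TT F then rl F x n @ [x n]
      else rl F x n @ [LEAST a. rl F x n @ [a] \<in> TT F])"

definition retr :: "(nat \<Rightarrow> nat) set \<Rightarrow> (nat \<Rightarrow> nat) \<Rightarrow> (nat \<Rightarrow> nat)" where
  "retr F x = (\<lambda>i. rl F x (Suc i) ! i)"

lemma TT_ext: "s \<in> TT F \<Longrightarrow> \<exists>a. s @ [a] \<in> TT F"
proof -
  assume "s \<in> TT F"
  then obtain z where z: "z \<in> F" "\<forall>i<length s. z i = s!i" by (auto simp: TT_def)
  then have "s @ [z (length s)] \<in> TT F"
    unfolding TT_def by (auto simp: nth_append less_Suc_eq)
  then show ?thesis by blast
qed

lemma rl_props: "F \<noteq> {} \<Longrightarrow> rl F x n \<in> TT F \<and> length (rl F x n) = n"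
proof (induction n)
  case 0
  then show ?case by (auto simp: TT_def)
next
  case (Suc n)
  then have "\<exists>a. rl F x n @ [a] \<in> TT F" using TT_ext by blast
  then have "rl F x n @ [LEAST a. rl F x n @ [a] \<in> TT F] \<in> TT F" by (rule LeastI_ex)
  then show ?case using Suc by auto
qed

lemma rl_prefix: "n \<le> m \<Longrightarrow> \<exists>t. rl F x m = rl F x n @ t"
proof (induction m)
  case 0
  then show ?case by auto
next
  case (Suc m)
  then show ?case
    by (cases "n = Suc m") auto
qed

lemma rl_nth: assumes "F \<noteq> {}" "i < n" shows "rl F x n ! i = retr F x i"
proof -
  obtain t where "rl F x n = rl F x (Suc i) @ t" using rl_prefix[of "Suc i" n] assms by auto
  then show ?thesis using rl_props[OF assms(1), of x "Suc i"] by (simp add: retr_def nth_append)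
qed

lemma rl_agree: "agree x x' n \<Longrightarrow> rl F x n = rl F x' n"
proof (induction n)
  case 0
  then show ?case by simp
next
  case (Suc n)
  then have "rl F x n = rl F x' n" "x n = x' n" by (auto simp: agree_def)
  then show ?case by simp
qed

lemma retr_in: assumes "closed F" "F \<noteq> {}" shows "retr F x \<in> F"
proof (rule closed_cyl[OF assms(1)])
  fix N
  obtain z where "z \<in> F" "\<forall>i<N. z i = rl F x N ! i"
    using rl_props[OF assms(2), of x N] by (auto simp: TT_def)
  then show "\<exists>z\<in>F. agree z (retr F x) N"
    using rl_nth[OF assms(2)] by (auto simp: agree_def)
qed

lemma retr_id: assumes "F \<noteq> {}" "x \<in> F" shows "retr F x = x"
proof -
  have mem: "map x [0..<n] @ [x n] \<in> TT F" for n
      using assms(2) unfolding TT_def by (auto simp: nth_append less_Suc_eq)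
  have "rl F x n = map x [0..<n]" for n
  proof (induction n)
    case 0
    then show ?case by simp
  next
    case (Suc n)
    have "map x [0..<n] @ [x n] \<in> TT F"
      using assms(2) unfolding TT_def by (auto simp: nth_append less_Suc_eq)
    then show ?case using Suc by simp
  qed
  then have "rl F x (Suc i) ! i = x i" for i using mem by (simp add: nth_append)
  then show ?thesis by (auto simp: retr_def)
qed

lemma retr_agree: assumes "F \<noteq> {}" "agree x x' N" shows "agree (retr F x) (retr F x') N"
  using rl_agree[OF assms(2), of F] rl_nth[OF assms(1)] unfolding agree_def by metis

lemma retr_cont: assumes "F \<noteq> {}" shows "continuous_on UNIV (retr F)"
proof (rule continuous_on_cyl)
  fix x V assume "open V" "retr F x \<in> V"
  then obtain N where N: "\<forall>z. agree z (retr F x) N \<longrightarrow> z \<in> V" using open_cyl by blast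
  show "\<exists>N. \<forall>z\<in>UNIV. agree z x N \<longrightarrow> retr F z \<in> V"
    using N retr_agree[OF assms] by blast
qed

lemma analytic_from_codes:
  fixes \<Gamma> :: "(nat \<Rightarrow> nat) \<Rightarrow> nat \<Rightarrow> 'a::complete_space"
  assumes cF: "closed F"
    and loc: "\<And>p k. \<exists>N. \<forall>q. agree q p N \<longrightarrow> \<Gamma> q k = \<Gamma> p k"
    and cau: "\<And>p k l. p \<in> F \<Longrightarrow> k \<le> l \<Longrightarrow> dist (\<Gamma> p k) (\<Gamma> p l) \<le> (1/2)^k"
  shows "analytic_set ((\<lambda>p. lim (\<Gamma> p)) ` F)"
proof (cases "F = {}")
  case True
  then show ?thesis by (simp add: analytic_set_def)
next
  case False
  define L where "L p = lim (\<Gamma> p)" for p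
  have conv: "(\<Gamma> p) \<longlonglongrightarrow> L p" if "p \<in> F" for p
  proof -
    have "Cauchy (\<Gamma> p)"
    proof (rule metric_CauchyI)
      fix e :: real assume "e > 0"
      obtain k where k: "(1/2)^k < e/2" using real_arch_pow_inv[of "e/2" "1/2"] \<open>e>0\<close> by auto
      have "dist (\<Gamma> p m) (\<Gamma> p n) < e" if "m \<ge> k" "n \<ge> k" for m n
      proof -
        have "dist (\<Gamma> p m) (\<Gamma> p n) \<le> dist (\<Gamma> p k) (\<Gamma> p m) + dist (\<Gamma> p k) (\<Gamma> p n)"
          by (rule dist_triangle3)
        also have "\<dots> \<le> (1/2)^k + (1/2)^k" using cau[OF \<open>p\<in>F\<close>] that by (intro add_mono) auto
        finally show ?thesis using k by auto
      qed
      then show "\<exists>M. \<forall>m\<ge>M. \<forall>n\<ge>M. dist (\<Gamma> p m) (\<Gamma> p n) < e" by blast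
    qed
    then show ?thesis unfolding L_def by (simp add: Cauchy_convergent_iff convergent_LIMSEQ_iff)
  qed
  have near: "dist (\<Gamma> p k) (L p) \<le> (1/2)^k" if "p \<in> F" for p k
  proof (rule Lim_dist_ubound[OF _ conv[OF that]])
    show "\<forall>\<^sub>F n in sequentially. dist (\<Gamma> p k) (\<Gamma> p n) \<le> (1/2)^k"
      using eventually_ge_at_top[of k] by (rule eventually_mono) (use cau[OF that] in auto)
  qed auto
  have contL: "continuous_on F L"
  proof (rule continuous_on_cyl_metric)
    fix p :: "nat \<Rightarrow> nat" and e :: real assume "p \<in> F" "e > 0"
    obtain k where k: "(1/2)^k < e/2" using real_arch_pow_inv[of "e/2" "1/2"] \<open>e>0\<close> by auto
    obtain N where N: "\<forall>q. agree q p N \<longrightarrow> \<Gamma> q k = \<Gamma> p k" using loc by blast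
    have "dist (L q) (L p) < e" if "q \<in> F" "agree q p N" for q
    proof -
      have "dist (L q) (L p) \<le> dist (\<Gamma> p k) (L q) + dist (\<Gamma> p k) (L p)" by (rule dist_triangle3)
      also have "\<dots> \<le> (1/2)^k + (1/2)^k" using near[OF that(1), of k] near[OF \<open>p\<in>F\<close>, of k] N that(2)
        by (intro add_mono) auto
      finally show ?thesis using k by auto
    qed
    then show "\<exists>N. \<forall>z\<in>F. agree z p N \<longrightarrow> dist (L z) (L p) < e" by blast
  qed
  have "continuous_on UNIV (L \<circ> retr F)"
    by (rule continuous_on_compose[OF retr_cont[OF False]])
       (rule continuous_on_subset[OF contL], use retr_in[OF cF False] in auto)
  moreover have "(L \<circ> retr F) ` UNIV = L ` F"
  proof
    show "(L \<circ> retr F) ` UNIV \<subseteq> L ` F" using retr_in[OF cF False] by auto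
    show "L ` F \<subseteq> (L \<circ> retr F) ` UNIV"
    proof
      fix a assume "a \<in> L ` F"
      then obtain p where "p \<in> F" "a = L p" by auto
      then show "a \<in> range (L \<circ> retr F)" using retr_id[OF False] by (auto intro!: image_eqI[of _ _ p])
    qed
  qed
  ultimately show ?thesis unfolding analytic_set_def L_def by blast
qed



lemma codes_lim:
  fixes g :: "nat \<Rightarrow> 'a::complete_space"
  assumes cau: "\<And>k l. k \<le> l \<Longrightarrow> dist (g k) (g l) \<le> (1/2)^k"
  shows "g \<longlonglongrightarrow> lim g"
proof -
  have "Cauchy g"
  proof (rule metric_CauchyI)
    fix e :: real assume "e > 0"
    obtain k where k: "(1/2)^k < e/2" using real_arch_pow_inv[of "e/2" "1/2"] \<open>e>0\<close> by auto
    have "dist (g m) (g n) < e" if "m \<ge> k" "n \<ge> k" for m n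
    proof -
      have "dist (g m) (g n) \<le> dist (g k) (g m) + dist (g k) (g n)"
        by (rule dist_triangle3)
      also have "\<dots> \<le> (1/2)^k + (1/2)^k" using cau that by (intro add_mono) auto
      finally show ?thesis using k by auto
    qed
    then show "\<exists>M. \<forall>m\<ge>M. \<forall>n\<ge>M. dist (g m) (g n) < e" by blast
  qed
  then show ?thesis by (simp add: Cauchy_convergent_iff convergent_LIMSEQ_iff)
qed

lemma lim_ubound:
  fixes g :: "nat \<Rightarrow> 'a::metric_space"
  assumes "g \<longlonglongrightarrow> L" "\<And>l. l \<ge> k \<Longrightarrow> dist z (g l) \<le> c"
  shows "dist z L \<le> c"
proof (rule Lim_dist_ubound[OF _ assms(1)])
  show "\<forall>\<^sub>F n in sequentially. dist z (g n) \<le> c"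
    using eventually_ge_at_top[of k] by (rule eventually_mono) (use assms(2) in auto)
qed auto

lemma FS_I: "finite \<alpha> \<Longrightarrow> \<alpha> \<noteq> {} \<Longrightarrow> \<alpha> \<subseteq> S \<Longrightarrow> \<Sum>\<alpha> \<in> FS S"
  unfolding FS_def by blast

lemma FS_mono: "S \<subseteq> T \<Longrightarrow> FS S \<subseteq> FS T"
  unfolding FS_def by blast

definition dd :: "(nat \<Rightarrow> nat) \<Rightarrow> nat \<Rightarrow> nat" where "dd p i = p (2*i)"
definition mm :: "(nat \<Rightarrow> nat) \<Rightarrow> nat \<Rightarrow> nat" where "mm p k = p (2*k+1)"
definition mkcode :: "(nat \<Rightarrow> nat) \<Rightarrow> (nat \<Rightarrow> nat) \<Rightarrow> nat \<Rightarrow> nat" where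
  "mkcode e m n = (if even n then e (n div 2) else m (n div 2))"

lemma dd_mkcode[simp]: "dd (mkcode e m) = e" and mm_mkcode[simp]: "mm (mkcode e m) = m"
  by (auto simp: dd_def mm_def mkcode_def fun_eq_iff)

lemma agree_dd: "agree q p N \<Longrightarrow> 2*j < N \<Longrightarrow> dd q j = dd p j"
  by (auto simp: agree_def dd_def)
lemma agree_mm: "agree q p N \<Longrightarrow> 2*k+1 < N \<Longrightarrow> mm q k = mm p k"
  by (auto simp: agree_def mm_def)

definition Gam :: "(nat \<Rightarrow> 'a) \<Rightarrow> (nat \<Rightarrow> nat) \<Rightarrow> nat \<Rightarrow> 'a" where
  "Gam y p k = y (dd p (mm p k))"

lemma Gam_loc: "\<exists>N. \<forall>q. agree q p N \<longrightarrow> Gam y q k = Gam y p k"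
proof (intro exI allI impI)
  fix q assume a: "agree q p (2*k + 2*mm p k + 2)"
  then have "mm q k = mm p k" by (rule agree_mm) auto
  moreover have "dd q (mm p k) = dd p (mm p k)" using a by (rule agree_dd) auto
  ultimately show "Gam y q k = Gam y p k" by (simp add: Gam_def)
qed

definition V12 :: "(nat \<Rightarrow> nat) set" where
  "V12 = {p. (\<forall>i. dd p i < dd p (Suc i)) \<and> (\<forall>k. mm p k \<le> mm p (Suc k))}"

lemma V12_closed: "closed V12"
proof -
  have eq: "V12 = {p. \<forall>i. dd p i < dd p (Suc i)} \<inter> {p. \<forall>k. mm p k \<le> mm p (Suc k)}"
    by (auto simp: V12_def)
  have c1: "closed {p. \<forall>i. dd p i < dd p (Suc i)}"
  proof (rule closed_local)
    fix i p show "\<exists>N. \<forall>q. agree q p N \<longrightarrow> (dd q i < dd q (Suc i)) = (dd p i < dd p (Suc i))"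
      by (rule exI[of _ "2*i+3"]) (auto simp: agree_dd)
  qed
  have c2: "closed {p. \<forall>k. mm p k \<le> mm p (Suc k)}"
  proof (rule closed_local)
    fix i p show "\<exists>N. \<forall>q. agree q p N \<longrightarrow> (mm q i \<le> mm q (Suc i)) = (mm p i \<le> mm p (Suc i))"
      by (rule exI[of _ "2*i+4"]) (auto simp: agree_mm)
  qed
  show ?thesis unfolding eq using c1 c2 by (rule closed_Int)
qed

lemma V12_D: assumes "p \<in> V12"
  shows "strict_mono (dd p)" "mono (mm p)" "\<And>j. j \<le> dd p j"
  using assms by (auto simp: V12_def strict_mono_Suc_iff mono_iff_le_Suc intro: strict_mono_imp_increasing)

lemma sum_loc:
  assumes "agree q p N" "finite \<alpha>" "2 * \<Sum>\<alpha> < N"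
  shows "(\<Sum>j\<in>\<alpha>. dd q j) = (\<Sum>j\<in>\<alpha>. dd p j)"
proof (rule sum.cong[OF refl])
  fix j assume "j \<in> \<alpha>"
  then have "j \<le> \<Sum>\<alpha>" using assms(2) by (metis sum.remove le_add1)
  then show "dd q j = dd p j" using assms by (intro agree_dd) auto
qed

definition P3 :: "(nat \<Rightarrow> 'a::metric_space) \<Rightarrow> nat \<times> nat set \<times> nat set \<Rightarrow> (nat \<Rightarrow> nat) \<Rightarrow> bool" where
  "P3 y = (\<lambda>(k,\<alpha>,\<beta>) p. finite \<alpha> \<and> finite \<beta> \<and> \<alpha> \<noteq> {} \<and> \<beta> \<noteq> {} \<and> \<alpha> \<subseteq> {mm p k..} \<and> \<beta> \<subseteq> {mm p k..}
      \<longrightarrow> dist (y (\<Sum>j\<in>\<alpha>. dd p j)) (y (\<Sum>j\<in>\<beta>. dd p j)) \<le> (1/2)^k)"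

definition FFS :: "(nat \<Rightarrow> 'a::metric_space) \<Rightarrow> (nat \<Rightarrow> nat) set" where
  "FFS y = V12 \<inter> {p. \<forall>j. P3 y j p}"

lemma FFS_closed: "closed (FFS y)"
  unfolding FFS_def
proof (intro closed_Int V12_closed closed_local)
  fix j :: "nat \<times> nat set \<times> nat set" and p
  obtain k \<alpha> \<beta> where j: "j = (k,\<alpha>,\<beta>)" by (cases j) auto
  show "\<exists>N. \<forall>q. agree q p N \<longrightarrow> P3 y j q = P3 y j p"
  proof (cases "finite \<alpha> \<and> finite \<beta>")
    case True
    show ?thesis
    proof (intro exI allI impI)
      fix q assume a: "agree q p (2*k + 2 * \<Sum>\<alpha> + 2 * \<Sum>\<beta> + 2)"
      have "mm q k = mm p k" using a by (rule agree_mm) auto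
      moreover have "(\<Sum>j\<in>\<alpha>. dd q j) = (\<Sum>j\<in>\<alpha>. dd p j)" using a True by (intro sum_loc) auto
      moreover have "(\<Sum>j\<in>\<beta>. dd q j) = (\<Sum>j\<in>\<beta>. dd p j)" using a True by (intro sum_loc) auto
      ultimately show "P3 y j q = P3 y j p" by (simp add: P3_def j)
    qed
  next
    case False
    then show ?thesis by (auto simp: P3_def j)
  qed
qed

lemma FFS_cau: assumes "p \<in> FFS y" "k \<le> l" shows "dist (Gam y p k) (Gam y p l) \<le> (1/2)^k"
proof -
  have "P3 y (k, {mm p k}, {mm p l}) p" using assms(1) by (auto simp: FFS_def)
  moreover have "mm p k \<le> mm p l" using V12_D(2)[of p] assms by (auto simp: FFS_def mono_def)
  ultimately show ?thesis by (auto simp: P3_def Gam_def)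
qed

lemma FS_limits_code:
  fixes y :: "nat \<Rightarrow> 'a::complete_space"
  shows "FS_limits y = (\<lambda>p. lim (Gam y p)) ` FFS y"
proof
  show "(\<lambda>p. lim (Gam y p)) ` FFS y \<subseteq> FS_limits y"
  proof
    fix \<eta> assume "\<eta> \<in> (\<lambda>p. lim (Gam y p)) ` FFS y"
    then obtain p where p: "p \<in> FFS y" and \<eta>: "\<eta> = lim (Gam y p)" by auto
    have V: "p \<in> V12" using p by (auto simp: FFS_def)
    define d where "d = dd p"
    define m where "m = mm p"
    have sd: "strict_mono d" and mm: "mono m" using V12_D[OF V] by (auto simp: d_def m_def)
    have conv: "Gam y p \<longlonglongrightarrow> \<eta>" unfolding \<eta> by (rule codes_lim) (use FFS_cau[OF p] in auto)
    have "infinite (range d)" using sd by (simp add: range_inj_infinite strict_mono_imp_inj_on)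
    moreover have "\<exists>K. finite K \<and> (\<forall>n \<in> FS (range d - K). y n \<in> U)" if U: "open U" "\<eta> \<in> U" for U
    proof -
      obtain e where "e > 0" "ball \<eta> e \<subseteq> U" using U open_contains_ball by blast
      obtain k where k: "(1/2)^k < e" using real_arch_pow_inv[of e "1/2"] \<open>e>0\<close> by auto
      have "y n \<in> U" if n: "n \<in> FS (range d - d ` {..<m k})" for n
      proof -
        obtain \<alpha>' where \<alpha>': "n = \<Sum>\<alpha>'" "\<alpha>' \<subseteq> range d - d ` {..<m k}" "finite \<alpha>'" "\<alpha>' \<noteq> {}"
          using n by (auto simp: FS_def)
        define \<alpha> where "\<alpha> = d -` \<alpha>'"
        have inj: "inj d" using sd by (simp add: strict_mono_imp_inj_on)
        have img: "d ` \<alpha> = \<alpha>'" using \<alpha>'(2) by (auto simp: \<alpha>_def)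
        have fa: "finite \<alpha>" using \<alpha>'(3) inj by (simp add: \<alpha>_def finite_vimageI)
        have na: "\<alpha> \<noteq> {}" using img \<alpha>'(4) by auto
        have sub: "\<alpha> \<subseteq> {m k..}"
        proof
          fix x assume "x \<in> \<alpha>"
          then have "d x \<notin> d ` {..<m k}" using \<alpha>'(2) by (auto simp: \<alpha>_def)
          then have "\<not> x < m k" by blast
          then show "x \<in> {m k..}" by simp
        qed
        have "\<Sum>(d ` \<alpha>) = (\<Sum>j\<in>\<alpha>. d j)"
          by (subst sum.reindex) (auto intro: inj_on_subset[OF inj])
        then have nsum: "n = (\<Sum>j\<in>\<alpha>. d j)" using \<alpha>'(1) img by simp
        have "dist (y n) (Gam y p l) \<le> (1/2)^k" if "l \<ge> k" for l
        proof -
          have "m k \<le> m l" using mm that by (simp add: mono_def)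
          then have "P3 y (k, \<alpha>, {m l}) p" using p by (auto simp: FFS_def)
          then show ?thesis using fa na sub \<open>m k \<le> m l\<close>
            by (auto simp: P3_def Gam_def nsum d_def m_def)
        qed
        then have "dist (y n) \<eta> \<le> (1/2)^k" by (intro lim_ubound[OF conv]) auto
        then show ?thesis using k \<open>ball \<eta> e \<subseteq> U\<close> by (auto simp: dist_commute subset_iff)
      qed
      then show ?thesis by blast
    qed
    ultimately show "\<eta> \<in> FS_limits y" unfolding FS_limits_def by blast
  qed
next
  show "FS_limits y \<subseteq> (\<lambda>p. lim (Gam y p)) ` FFS y"
  proof
    fix \<eta> assume "\<eta> \<in> FS_limits y"
    then obtain D where D: "infinite D"
      "\<And>U. open U \<Longrightarrow> \<eta> \<in> U \<Longrightarrow> \<exists>K. finite K \<and> (\<forall>n \<in> FS (D - K). y n \<in> U)"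
      unfolding FS_limits_def by blast
    have "\<forall>k. \<exists>K. finite K \<and> (\<forall>n \<in> FS (D - K). y n \<in> ball \<eta> ((1/2)^Suc k))"
    proof
      fix k show "\<exists>K. finite K \<and> (\<forall>n \<in> FS (D - K). y n \<in> ball \<eta> ((1/2)^Suc k))"
        by (rule D(2)) auto
    qed
    then obtain Kf where Kf: "\<And>k. finite (Kf k)" "\<And>k n. n \<in> FS (D - Kf k) \<Longrightarrow> y n \<in> ball \<eta> ((1/2)^Suc k)"
      by metis
    define e where "e = enumerate D"
    define m where "m k = Suc (\<Sum>i\<le>k. \<Sum>(Kf i))" for k
    have se: "strict_mono e" using D(1) by (simp add: e_def strict_mono_enumerate)
    have eD: "e j \<in> D" for j using D(1) by (simp add: e_def enumerate_in_set)
    have ej: "j \<le> e j" for j using D(1) by (simp add: e_def le_enumerate)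
    have Km: "x < m k" if "x \<in> Kf k" for x k
    proof -
      have "x \<le> \<Sum>(Kf k)" using that Kf(1) by (metis sum.remove le_add1)
      also have "\<dots> \<le> (\<Sum>i\<le>k. \<Sum>(Kf i))" by (rule member_le_sum) auto
      finally show ?thesis by (simp add: m_def)
    qed
    have mmono: "m k \<le> m (Suc k)" for k by (simp add: m_def)
    define p where "p = mkcode e m"
    have pV: "p \<in> V12" using se mmono by (simp add: p_def V12_def strict_mono_Suc_iff)
    have inFS: "(\<Sum>j\<in>\<alpha>. e j) \<in> FS (D - Kf k)" if "finite \<alpha>" "\<alpha> \<noteq> {}" "\<alpha> \<subseteq> {m k..}" for \<alpha> k
    proof -
      have "(\<Sum>j\<in>\<alpha>. e j) = \<Sum>(e ` \<alpha>)"
        using se by (simp add: sum.reindex strict_mono_imp_inj_on inj_on_subset)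
      moreover have "e ` \<alpha> \<subseteq> D - Kf k"
      proof
        fix x assume "x \<in> e ` \<alpha>"
        then obtain j where "j \<in> \<alpha>" "x = e j" by auto
        then have "m k \<le> x" using that(3) ej[of j] by auto
        then show "x \<in> D - Kf k" using Km[of x k] eD \<open>x = e j\<close> by auto
      qed
      ultimately show ?thesis using that by (auto intro: FS_I)
    qed
    have pP3: "P3 y j p" for j
    proof -
      obtain k \<alpha> \<beta> where j: "j = (k,\<alpha>,\<beta>)" by (cases j) auto
      show ?thesis unfolding P3_def j p_def case_prod_conv dd_mkcode mm_mkcode
      proof (intro impI)
        assume "finite \<alpha> \<and> finite \<beta> \<and> \<alpha> \<noteq> {} \<and> \<beta> \<noteq> {} \<and> \<alpha> \<subseteq> {m k..} \<and> \<beta> \<subseteq> {m k..}"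
        then have a: "finite \<alpha>" "finite \<beta>" "\<alpha> \<noteq> {}" "\<beta> \<noteq> {}" "\<alpha> \<subseteq> {m k..}" "\<beta> \<subseteq> {m k..}"
          by auto
        have "dist (y (\<Sum>j\<in>\<alpha>. e j)) (y (\<Sum>j\<in>\<beta>. e j)) \<le> dist (y (\<Sum>j\<in>\<alpha>. e j)) \<eta> + dist (y (\<Sum>j\<in>\<beta>. e j)) \<eta>"
          by (rule dist_triangle2)
        also have "\<dots> \<le> (1/2)^Suc k + (1/2)^Suc k"
          using Kf(2)[OF inFS[OF a(1,3,5)]] Kf(2)[OF inFS[OF a(2,4,6)]]
          by (intro add_mono) (auto simp: dist_commute)
        also have "\<dots> = (1/2)^k" by simp
        finally show "dist (y (\<Sum>j\<in>\<alpha>. e j)) (y (\<Sum>j\<in>\<beta>. e j)) \<le> (1/2)^k" .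
      qed
    qed
    have pF: "p \<in> FFS y" using pV pP3 by (simp add: FFS_def)
    have "Gam y p \<longlonglongrightarrow> \<eta>"
    proof (rule metric_LIMSEQ_I)
      fix r :: real assume "r > 0"
      obtain k where k: "(1/2)^k < r" using real_arch_pow_inv[of r "1/2"] \<open>r>0\<close> by auto
      have "norm 0 = 0" by simp
      have "dist (Gam y p n) \<eta> < r" if "n \<ge> k" for n
      proof -
        have "Gam y p n = y (\<Sum>j\<in>{m n}. e j)" by (simp add: Gam_def p_def)
        then have "dist (Gam y p n) \<eta> < (1/2)^Suc n" using Kf(2)[OF inFS[of "{m n}" n]] by (auto simp: dist_commute)
        also have "(1/2::real)^Suc n \<le> (1/2)^k" by (rule power_decreasing) (use that in auto)
        finally show ?thesis using k by auto
      qed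
      then show "\<exists>no. \<forall>n\<ge>no. dist (Gam y p n) \<eta> < r" by blast
    qed
    then have "lim (Gam y p) = \<eta>" by (rule limI)
    then show "\<eta> \<in> (\<lambda>p. lim (Gam y p)) ` FFS y" using pF by blast
  qed
qed


lemma H_char: "H_limits y = {\<eta>. \<exists>D. infinite D \<and>
      (\<forall>U. open U \<and> \<eta> \<in> U \<longrightarrow> finite {n \<in> FS D. y n \<notin> U})}"
proof (intro set_eqI iffI)
  fix \<eta> assume "\<eta> \<in> H_limits y"
  then obtain E where E0: "E \<notin> Hindman_ideal"
      "\<forall>U. open U \<and> \<eta> \<in> U \<longrightarrow> finite {n \<in> E. y n \<notin> U}"
    unfolding H_limits_def by blast
  then have "IP_set E" by (simp add: Hindman_ideal_def)
  then obtain D where "infinite D" "FS D \<subseteq> E" by (auto simp: IP_set_def)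
  note E = this E0(2)
  have "finite {n \<in> FS D. y n \<notin> U}" if "open U" "\<eta> \<in> U" for U
    by (rule finite_subset[of _ "{n \<in> E. y n \<notin> U}"]) (use E that in auto)
  then show "\<eta> \<in> {\<eta>. \<exists>D. infinite D \<and> (\<forall>U. open U \<and> \<eta> \<in> U \<longrightarrow> finite {n \<in> FS D. y n \<notin> U})}"
    using E(1) by blast
next
  fix \<eta> assume "\<eta> \<in> {\<eta>. \<exists>D. infinite D \<and> (\<forall>U. open U \<and> \<eta> \<in> U \<longrightarrow> finite {n \<in> FS D. y n \<notin> U})}"
  then obtain D where "infinite D" "\<forall>U. open U \<and> \<eta> \<in> U \<longrightarrow> finite {n \<in> FS D. y n \<notin> U}" by blast
  moreover have "FS D \<notin> Hindman_ideal" using \<open>infinite D\<close>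
    unfolding Hindman_ideal_def IP_set_def by auto
  ultimately show "\<eta> \<in> H_limits y" unfolding H_limits_def by blast
qed

definition Q3 :: "(nat \<Rightarrow> 'a::metric_space) \<Rightarrow> nat \<times> nat set \<times> nat set \<Rightarrow> (nat \<Rightarrow> nat) \<Rightarrow> bool" where
  "Q3 y = (\<lambda>(k,\<alpha>,\<beta>) p. finite \<alpha> \<and> finite \<beta> \<and> \<alpha> \<noteq> {} \<and> \<beta> \<noteq> {} \<and>
      mm p k \<le> (\<Sum>j\<in>\<alpha>. dd p j) \<and> mm p k \<le> (\<Sum>j\<in>\<beta>. dd p j)
      \<longrightarrow> dist (y (\<Sum>j\<in>\<alpha>. dd p j)) (y (\<Sum>j\<in>\<beta>. dd p j)) \<le> (1/2)^k)"

definition FH :: "(nat \<Rightarrow> 'a::metric_space) \<Rightarrow> (nat \<Rightarrow> nat) set" where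
  "FH y = V12 \<inter> {p. \<forall>j. Q3 y j p}"

lemma FH_closed: "closed (FH y)"
  unfolding FH_def
proof (intro closed_Int V12_closed closed_local)
  fix j :: "nat \<times> nat set \<times> nat set" and p
  obtain k \<alpha> \<beta> where j: "j = (k,\<alpha>,\<beta>)" by (cases j) auto
  show "\<exists>N. \<forall>q. agree q p N \<longrightarrow> Q3 y j q = Q3 y j p"
  proof (cases "finite \<alpha> \<and> finite \<beta>")
    case True
    show ?thesis
    proof (intro exI allI impI)
      fix q assume a: "agree q p (2*k + 2 * \<Sum>\<alpha> + 2 * \<Sum>\<beta> + 2)"
      have "mm q k = mm p k" using a by (rule agree_mm) auto
      moreover have "(\<Sum>j\<in>\<alpha>. dd q j) = (\<Sum>j\<in>\<alpha>. dd p j)" using a True by (intro sum_loc) auto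
      moreover have "(\<Sum>j\<in>\<beta>. dd q j) = (\<Sum>j\<in>\<beta>. dd p j)" using a True by (intro sum_loc) auto
      ultimately show "Q3 y j q = Q3 y j p" by (simp add: Q3_def j)
    qed
  next
    case False
    then show ?thesis by (auto simp: Q3_def j)
  qed
qed

lemma FH_cau: assumes "p \<in> FH y" "k \<le> l" shows "dist (Gam y p k) (Gam y p l) \<le> (1/2)^k"
proof -
  have V: "p \<in> V12" using assms(1) by (auto simp: FH_def)
  have "Q3 y (k, {mm p k}, {mm p l}) p" using assms(1) by (auto simp: FH_def)
  moreover have "mm p k \<le> mm p l" using V12_D(2)[OF V] assms by (auto simp: mono_def)
  moreover have "mm p l \<le> dd p (mm p l)" "mm p k \<le> dd p (mm p k)" using V12_D(3)[OF V] by auto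
  ultimately show ?thesis by (auto simp: Q3_def Gam_def)
qed

lemma H_limits_code:
  fixes y :: "nat \<Rightarrow> 'a::complete_space"
  shows "H_limits y = (\<lambda>p. lim (Gam y p)) ` FH y"
proof
  show "(\<lambda>p. lim (Gam y p)) ` FH y \<subseteq> H_limits y"
  proof
    fix \<eta> assume "\<eta> \<in> (\<lambda>p. lim (Gam y p)) ` FH y"
    then obtain p where p: "p \<in> FH y" and \<eta>: "\<eta> = lim (Gam y p)" by auto
    have V: "p \<in> V12" using p by (auto simp: FH_def)
    define d where "d = dd p"
    define m where "m = mm p"
    have sd: "strict_mono d" and mm: "mono m" and dj: "\<And>j. j \<le> d j"
      using V12_D[OF V] by (auto simp: d_def m_def)
    have conv: "Gam y p \<longlonglongrightarrow> \<eta>" unfolding \<eta> by (rule codes_lim) (use FH_cau[OF p] in auto)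
    have "infinite (range d)" using sd by (simp add: range_inj_infinite strict_mono_imp_inj_on)
    moreover have "finite {n \<in> FS (range d). y n \<notin> U}" if U: "open U" "\<eta> \<in> U" for U
    proof -
      obtain e where "e > 0" "ball \<eta> e \<subseteq> U" using U open_contains_ball by blast
      obtain k where k: "(1/2)^k < e" using real_arch_pow_inv[of e "1/2"] \<open>e>0\<close> by auto
      have inU: "y n \<in> U" if n: "n \<in> FS (range d)" "m k \<le> n" for n
      proof -
        obtain \<alpha>' where \<alpha>': "n = \<Sum>\<alpha>'" "\<alpha>' \<subseteq> range d" "finite \<alpha>'" "\<alpha>' \<noteq> {}"
          using n by (auto simp: FS_def)
        define \<alpha> where "\<alpha> = d -` \<alpha>'"
        have inj: "inj d" using sd by (simp add: strict_mono_imp_inj_on)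
        have img: "d ` \<alpha> = \<alpha>'" using \<alpha>'(2) by (auto simp: \<alpha>_def)
        have fa: "finite \<alpha>" using \<alpha>'(3) inj by (simp add: \<alpha>_def finite_vimageI)
        have na: "\<alpha> \<noteq> {}" using img \<alpha>'(4) by auto
        have "\<Sum>(d ` \<alpha>) = (\<Sum>j\<in>\<alpha>. d j)"
          by (subst sum.reindex) (auto intro: inj_on_subset[OF inj])
        then have nsum: "n = (\<Sum>j\<in>\<alpha>. d j)" using \<alpha>'(1) img by simp
        have "dist (y n) (Gam y p l) \<le> (1/2)^k" if "l \<ge> k" for l
        proof -
          have "m k \<le> m l" using mm that by (simp add: mono_def)
          moreover have "m l \<le> d (m l)" by (rule dj)
          moreover have "Q3 y (k, \<alpha>, {m l}) p" using p by (auto simp: FH_def)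
          ultimately show ?thesis using fa na n(2)
            by (auto simp: Q3_def Gam_def nsum d_def m_def)
        qed
        then have "dist (y n) \<eta> \<le> (1/2)^k" by (intro lim_ubound[OF conv]) auto
        then show ?thesis using k \<open>ball \<eta> e \<subseteq> U\<close> by (auto simp: dist_commute subset_iff)
      qed
      have "{n \<in> FS (range d). y n \<notin> U} \<subseteq> {..<m k}"
      proof
        fix n assume "n \<in> {n \<in> FS (range d). y n \<notin> U}"
        then show "n \<in> {..<m k}" using inU[of n] by (cases "m k \<le> n") auto
      qed
      then show ?thesis by (rule finite_subset) auto
    qed
    ultimately show "\<eta> \<in> H_limits y" unfolding H_char by blast
  qed
next
  show "H_limits y \<subseteq> (\<lambda>p. lim (Gam y p)) ` FH y"
  proof
    fix \<eta> assume "\<eta> \<in> H_limits y"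
    then obtain D where D: "infinite D"
      "\<And>U. open U \<Longrightarrow> \<eta> \<in> U \<Longrightarrow> finite {n \<in> FS D. y n \<notin> U}"
      unfolding H_char by blast
    define Bf where "Bf k = {n \<in> FS D. y n \<notin> ball \<eta> ((1/2)^Suc k)}" for k
    have fB: "finite (Bf k)" for k unfolding Bf_def by (rule D(2)) auto
    define e where "e = enumerate D"
    define m where "m k = Suc (\<Sum>i\<le>k. \<Sum>(Bf i))" for k
    have se: "strict_mono e" using D(1) by (simp add: e_def strict_mono_enumerate)
    have eD: "e j \<in> D" for j using D(1) by (simp add: e_def enumerate_in_set)
    have ej: "j \<le> e j" for j using D(1) by (simp add: e_def le_enumerate)
    have Bm: "x < m k" if "x \<in> Bf k" for x k
    proof -
      have "x \<le> \<Sum>(Bf k)" using that fB by (metis sum.remove le_add1)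
      also have "\<dots> \<le> (\<Sum>i\<le>k. \<Sum>(Bf i))" by (rule member_le_sum) auto
      finally show ?thesis by (simp add: m_def)
    qed
    have mmono: "m k \<le> m (Suc k)" for k by (simp add: m_def)
    define p where "p = mkcode e m"
    have pV: "p \<in> V12" using se mmono by (simp add: p_def V12_def strict_mono_Suc_iff)
    have inFS: "(\<Sum>j\<in>\<alpha>. e j) \<in> FS D" if "finite \<alpha>" "\<alpha> \<noteq> {}" for \<alpha>
    proof -
      have "(\<Sum>j\<in>\<alpha>. e j) = \<Sum>(e ` \<alpha>)"
        using se by (simp add: sum.reindex strict_mono_imp_inj_on inj_on_subset)
      moreover have "e ` \<alpha> \<subseteq> D" using eD by auto
      ultimately show ?thesis using that by (auto intro: FS_I)
    qed
    have close: "dist (y n) \<eta> < (1/2)^Suc k" if "n \<in> FS D" "m k \<le> n" for n k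
    proof -
      have "n \<notin> Bf k" using Bm[of n k] that by auto
      then show ?thesis using that by (auto simp: Bf_def dist_commute)
    qed
    have pQ3: "Q3 y j p" for j
    proof -
      obtain k \<alpha> \<beta> where j: "j = (k,\<alpha>,\<beta>)" by (cases j) auto
      show ?thesis unfolding Q3_def j p_def case_prod_conv dd_mkcode mm_mkcode
      proof (intro impI)
        assume "finite \<alpha> \<and> finite \<beta> \<and> \<alpha> \<noteq> {} \<and> \<beta> \<noteq> {} \<and> m k \<le> (\<Sum>j\<in>\<alpha>. e j) \<and> m k \<le> (\<Sum>j\<in>\<beta>. e j)"
        then have a: "finite \<alpha>" "finite \<beta>" "\<alpha> \<noteq> {}" "\<beta> \<noteq> {}" "m k \<le> (\<Sum>j\<in>\<alpha>. e j)" "m k \<le> (\<Sum>j\<in>\<beta>. e j)"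
          by auto
        have "dist (y (\<Sum>j\<in>\<alpha>. e j)) (y (\<Sum>j\<in>\<beta>. e j)) \<le> dist (y (\<Sum>j\<in>\<alpha>. e j)) \<eta> + dist (y (\<Sum>j\<in>\<beta>. e j)) \<eta>"
          by (rule dist_triangle2)
        also have "\<dots> \<le> (1/2)^Suc k + (1/2)^Suc k"
          using close[OF inFS[OF a(1,3)] a(5)] close[OF inFS[OF a(2,4)] a(6)]
          by (intro add_mono) auto
        also have "\<dots> = (1/2)^k" by simp
        finally show "dist (y (\<Sum>j\<in>\<alpha>. e j)) (y (\<Sum>j\<in>\<beta>. e j)) \<le> (1/2)^k" .
      qed
    qed
    have pF: "p \<in> FH y" using pV pQ3 by (simp add: FH_def)
    have "Gam y p \<longlonglongrightarrow> \<eta>"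
    proof (rule metric_LIMSEQ_I)
      fix r :: real assume "r > 0"
      obtain k where k: "(1/2)^k < r" using real_arch_pow_inv[of r "1/2"] \<open>r>0\<close> by auto
      have "dist (Gam y p n) \<eta> < r" if "n \<ge> k" for n
      proof -
        have "Gam y p n = y (\<Sum>j\<in>{m n}. e j)" by (simp add: Gam_def p_def)
        moreover have "m n \<le> (\<Sum>j\<in>{m n}. e j)" using ej by simp
        ultimately have "dist (Gam y p n) \<eta> < (1/2)^Suc n" using close[OF inFS[of "{m n}"]] by auto
        also have "(1/2::real)^Suc n \<le> (1/2)^k" by (rule power_decreasing) (use that in auto)
        finally show ?thesis using k by auto
      qed
      then show "\<exists>no. \<forall>n\<ge>no. dist (Gam y p n) \<eta> < r" by blast
    qed
    then have "lim (Gam y p) = \<eta>" by (rule limI)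
    then show "\<eta> \<in> (\<lambda>p. lim (Gam y p)) ` FH y" using pF by blast
  qed
qed

lemma FS_limits_analytic:
  fixes y :: "nat \<Rightarrow> 'a::complete_space"
  shows "analytic_set (FS_limits y)"
  unfolding FS_limits_code
  by (rule analytic_from_codes[OF FFS_closed Gam_loc FFS_cau])

lemma H_limits_analytic:
  fixes y :: "nat \<Rightarrow> 'a::complete_space"
  shows "analytic_set (H_limits y)"
  unfolding H_limits_code
  by (rule analytic_from_codes[OF FH_closed Gam_loc FH_cau])



lemma se_union: "finite A \<Longrightarrow> finite B \<Longrightarrow> A \<inter> B = {} \<Longrightarrow> set_encode (A \<union> B) = set_encode A + set_encode B"
  by (simp add: set_encode_def sum.union_disjoint)

lemma se_double: "2 * set_encode S = set_encode (Suc ` S)"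
proof (cases "finite S")
  case True
  have "set_encode (Suc ` S) = (\<Sum>k\<in>S. 2 ^ Suc k)"
    unfolding set_encode_def by (subst sum.reindex) (auto simp: o_def)
  also have "\<dots> = 2 * set_encode S" by (simp add: set_encode_def sum_distrib_left)
  finally show ?thesis by simp
next
  case False
  then have "infinite (Suc ` S)" using finite_imageD inj_Suc by (metis inj_on_subset subset_UNIV)
  then show ?thesis using False by (simp add: set_encode_inf)
qed

lemma se_carry:
  assumes fin: "finite P" "finite Q" "finite R"
    and ev: "\<forall>r\<in>R. even r" "\<forall>r\<in>P. even r" "\<forall>r\<in>Q. even r"
    and eq: "set_encode P + set_encode Q = set_encode R"
  shows "P \<inter> Q = {}"
proof -
  have s1: "set_encode P = set_encode (P - Q) + set_encode (P \<inter> Q)"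
  proof -
    have "set_encode P = set_encode ((P - Q) \<union> (P \<inter> Q))" by (simp add: Un_Diff_Int)
    also have "\<dots> = set_encode (P - Q) + set_encode (P \<inter> Q)" using fin by (intro se_union) auto
    finally show ?thesis .
  qed
  have s2: "set_encode Q = set_encode (Q - P) + set_encode (P \<inter> Q)"
  proof -
    have "set_encode Q = set_encode ((Q - P) \<union> (P \<inter> Q))" by (metis Un_Diff_Int Int_commute)
    also have "\<dots> = set_encode (Q - P) + set_encode (P \<inter> Q)" using fin by (intro se_union) auto
    finally show ?thesis .
  qed
  have s3: "set_encode ((P - Q) \<union> (Q - P)) = set_encode (P - Q) + set_encode (Q - P)"
    using fin by (intro se_union) auto
  have dis: "((P - Q) \<union> (Q - P)) \<inter> Suc ` (P \<inter> Q) = {}"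
    using ev by auto
  have s4: "set_encode (((P - Q) \<union> (Q - P)) \<union> Suc ` (P \<inter> Q)) = set_encode ((P - Q) \<union> (Q - P)) + set_encode (Suc ` (P \<inter> Q))"
    using fin dis by (intro se_union) auto
  have "set_encode (((P - Q) \<union> (Q - P)) \<union> Suc ` (P \<inter> Q)) = set_encode R"
    using s1 s2 s3 s4 se_double[of "P \<inter> Q"] eq by simp
  then have R: "((P - Q) \<union> (Q - P)) \<union> Suc ` (P \<inter> Q) = R"
    using fin by (subst (asm) set_encode_eq) auto
  show ?thesis
  proof (rule ccontr)
    assume "P \<inter> Q \<noteq> {}"
    then obtain x where x: "x \<in> P" "x \<in> Q" by auto
    then have "Suc x \<in> R" using R by blast
    then have "even (Suc x)" using ev(1) by blast
    moreover have "even x" using ev(2) x(1) by blast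
    ultimately show False by simp
  qed
qed

definition enc :: "nat list set \<Rightarrow> nat" where
  "enc A = set_encode ((\<lambda>s. 2 * to_nat s) ` A)"

lemma inj_2to: "inj (\<lambda>s::nat list. 2 * to_nat s)"
  by (auto simp: inj_def)

lemma enc_inj: assumes "finite A" "finite B" "enc A = enc B" shows "A = B"
proof -
  have "set_encode ((\<lambda>s. 2 * to_nat s) ` A) = set_encode ((\<lambda>s. 2 * to_nat s) ` B)"
    using assms(3) by (simp only: enc_def)
  then have "(\<lambda>s. 2 * to_nat s) ` A = (\<lambda>s. 2 * to_nat s) ` B"
    using assms(1,2) set_encode_eq[of "(\<lambda>s. 2 * to_nat s) ` A" "(\<lambda>s. 2 * to_nat s) ` B"] by simp
  then show ?thesis by (simp only: inj_image_eq_iff[OF inj_2to])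
qed

lemma enc_union: "finite A \<Longrightarrow> finite B \<Longrightarrow> A \<inter> B = {} \<Longrightarrow> enc (A \<union> B) = enc A + enc B"
  unfolding enc_def image_Un
  by (rule se_union) (auto dest: injD[OF inj_2to])

lemma enc_carry: assumes "finite A" "finite B" "finite C" "enc A + enc B = enc C"
  shows "A \<inter> B = {}"
proof -
  have "(\<lambda>s. 2 * to_nat s) ` A \<inter> (\<lambda>s. 2 * to_nat s) ` B = {}"
    using assms by (intro se_carry[of _ _ "(\<lambda>s. 2 * to_nat s) ` C"]) (auto simp: enc_def)
  then show ?thesis by auto
qed

lemma enc_sum: "finite A \<Longrightarrow> enc A = (\<Sum>s\<in>A. enc {s})"
  unfolding enc_def set_encode_def
  by (subst sum.reindex) (auto intro: inj_on_subset[OF inj_2to])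

definition pre :: "nat list \<Rightarrow> nat list \<Rightarrow> bool" where
  "pre s t \<longleftrightarrow> s = take (length s) t"

definition chainL :: "nat list set \<Rightarrow> bool" where
  "chainL A \<longleftrightarrow> (\<forall>s\<in>A. \<forall>t\<in>A. pre s t \<or> pre t s)"

lemma chain_inj_length: "chainL U \<Longrightarrow> inj_on length U"
  unfolding chainL_def pre_def inj_on_def by (metis take_all order_refl)

lemma chain_finite_short: assumes ch: "chainL U" shows "finite {s\<in>U. length s < N}"
proof -
  have inj: "inj_on length {s\<in>U. length s < N}"
    by (rule inj_on_subset[OF chain_inj_length[OF ch]]) auto
  have "length ` {s\<in>U. length s < N} \<subseteq> {..<N}" by auto
  then show ?thesis using inj_on_finite[OF inj] by blast
qed

lemma chain_branch:
  assumes ch: "chainL U" and inf: "infinite U"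
  shows "\<exists>x. \<forall>s\<in>U. s = map x [0..<length s]"
proof -
  have ex: "\<exists>s. s \<in> U \<and> i < length s" for i
  proof (rule ccontr)
    assume "\<not> ?thesis"
    then have "U \<subseteq> {s\<in>U. length s < Suc i}" by auto
    then show False using chain_finite_short[OF ch, of "Suc i"] inf finite_subset by blast
  qed
  define x where "x i = (SOME s. s \<in> U \<and> i < length s) ! i" for i
  have xi: "s ! i = x i" if "s \<in> U" "i < length s" for s i
  proof -
    define t where "t = (SOME s. s \<in> U \<and> i < length s)"
    have t: "t \<in> U" "i < length t" using someI_ex[OF ex[of i]] by (auto simp: t_def)
    have "pre s t \<or> pre t s" using ch t(1) that(1) by (auto simp: chainL_def)
    then have "s ! i = t ! i" using t(2) that(2) unfolding pre_def by (metis nth_take)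
    then show ?thesis by (simp add: x_def t_def)
  qed
  have "s = map x [0..<length s]" if "s \<in> U" for s
    by (rule nth_equalityI) (auto simp: xi[OF that])
  then show ?thesis by blast
qed

definition GG :: "nat list set set" where
  "GG = {A. finite A \<and> A \<noteq> {} \<and> chainL A}"

definition good :: "nat \<Rightarrow> bool" where
  "good n \<longleftrightarrow> (\<exists>A\<in>GG. enc A = n)"

definition decA :: "nat \<Rightarrow> nat list set" where
  "decA n = (SOME A. A \<in> GG \<and> enc A = n)"

definition longest :: "nat list set \<Rightarrow> nat list" where
  "longest A = (SOME s. s \<in> A \<and> (\<forall>t\<in>A. length t \<le> length s))"

definition ext :: "nat list \<Rightarrow> nat \<Rightarrow> nat" where
  "ext s = (\<lambda>i. if i < length s then s ! i else 0)"

definition yC :: "((nat \<Rightarrow> nat) \<Rightarrow> 'a) \<Rightarrow> nat \<Rightarrow> 'a" where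
  "yC f n = (if good n then f (ext (longest (decA n))) else f (\<lambda>_. 0))"

lemma decA: assumes "good n" shows "decA n \<in> GG \<and> enc (decA n) = n"
proof -
  obtain A where "A \<in> GG \<and> enc A = n" using assms by (auto simp: good_def)
  then show ?thesis unfolding decA_def by (rule someI[where P="\<lambda>A. A \<in> GG \<and> enc A = n"])
qed

lemma decA_eq: assumes "A \<in> GG" shows "decA (enc A) = A"
proof -
  have "good (enc A)" using assms by (auto simp: good_def)
  then have "decA (enc A) \<in> GG" "enc (decA (enc A)) = enc A" using decA by auto
  then show ?thesis using enc_inj[of "decA (enc A)" A] assms by (simp add: GG_def)
qed

lemma longest: assumes "finite A" "A \<noteq> {}"
  shows "longest A \<in> A \<and> (\<forall>t\<in>A. length t \<le> length (longest A))"
proof -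
  have "Max (length ` A) \<in> length ` A" using assms by auto
  then obtain s where s: "s \<in> A" "length s = Max (length ` A)" by auto
  then have "s \<in> A \<and> (\<forall>t\<in>A. length t \<le> length s)" using assms by auto
  then show ?thesis unfolding longest_def by (rule someI[where P="\<lambda>s. s \<in> A \<and> (\<forall>t\<in>A. length t \<le> length s)"])
qed

lemma ext_agree: assumes "s = map x [0..<length s]" "N \<le> length s" shows "agree (ext s) x N"
  unfolding agree_def ext_def
proof (intro allI impI)
  fix i assume "i < N"
  then have il: "i < length s" using assms(2) by simp
  have "s ! i = map x [0..<length s] ! i" using assms(1) by (rule arg_cong[where f="\<lambda>l. l ! i"])
  also have "\<dots> = x i" using il by simp
  finally show "(if i < length s then s ! i else 0) = x i" using il by simp
qed



lemma H_sub_FS: "H_limits y \<subseteq> FS_limits y"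
proof
  fix \<eta> assume "\<eta> \<in> H_limits y"
  then obtain D where D: "infinite D" "\<And>U. open U \<and> \<eta> \<in> U \<Longrightarrow> finite {n \<in> FS D. y n \<notin> U}"
    unfolding H_char by blast
  have "\<exists>K. finite K \<and> (\<forall>n \<in> FS (D - K). y n \<in> U)" if "open U" "\<eta> \<in> U" for U
  proof -
    define B where "B = {n \<in> FS D. y n \<notin> U}"
    have fB: "finite B" using D(2) that by (simp add: B_def)
    have "y n \<in> U" if n: "n \<in> FS (D - {..\<Sum>B})" for n
    proof -
      obtain \<alpha> where \<alpha>: "n = \<Sum>\<alpha>" "\<alpha> \<subseteq> D - {..\<Sum>B}" "finite \<alpha>" "\<alpha> \<noteq> {}"
        using n by (auto simp: FS_def)
      obtain a where a: "a \<in> \<alpha>" using \<alpha>(4) by blast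
      have "a \<le> n" using \<alpha>(1,3) a by (metis sum.remove le_add1)
      moreover have "\<Sum>B < a" using a \<alpha>(2) by auto
      ultimately have "n \<notin> B" using fB by (metis sum.remove le_add1 not_le order.strict_trans2)
      moreover have "n \<in> FS D" using n FS_mono[of "D - {..\<Sum>B}" D] by auto
      ultimately show ?thesis by (simp add: B_def)
    qed
    then show ?thesis by (intro exI[of _ "{..\<Sum>B}"]) auto
  qed
  then show "\<eta> \<in> FS_limits y" using D(1) unfolding FS_limits_def by blast
qed


lemma pre_px: "i \<le> j \<Longrightarrow> pre (map x [0..<i]) (map x [0..<j])"
  by (simp add: pre_def take_map)

lemma chain_px: "chainL ((\<lambda>j. map x [0..<j]) ` J)"
  unfolding chainL_def
proof (intro ballI)
  fix s t assume "s \<in> (\<lambda>j. map x [0..<j]) ` J" "t \<in> (\<lambda>j. map x [0..<j]) ` J"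
  then obtain i j where "s = map x [0..<i]" "t = map x [0..<j]" by auto
  then show "pre s t \<or> pre t s" using pre_px[of i j x] pre_px[of j i x] by (cases "i \<le> j") auto
qed

lemma branch_H:
  fixes f :: "(nat \<Rightarrow> nat) \<Rightarrow> 'a::topological_space"
  assumes cont: "continuous_on UNIV f"
  shows "f x \<in> H_limits (yC f)"
proof -
  define px where "px j = map x [0..<j]" for j
  define g where "g j = enc {px j}" for j
  have lpx: "length (px j) = j" for j by (simp add: px_def)
  have inj_px: "inj px" by (rule injI) (metis lpx)
  have inj_g: "inj g"
  proof (rule injI)
    fix i j assume "g i = g j"
    then have "{px i} = {px j}" unfolding g_def by (intro enc_inj) auto
    then show "i = j" using inj_px by (auto dest: injD)
  qed
  have infD: "infinite (range g)" using inj_g by (simp add: range_inj_infinite)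
  have val: "yC f (\<Sum>j\<in>J. g j) = f (ext (px (Max J)))" if J: "finite J" "J \<noteq> {}" for J
  proof -
    have "enc (px ` J) = (\<Sum>s\<in>px ` J. enc {s})" using J by (intro enc_sum) auto
    also have "\<dots> = (\<Sum>j\<in>J. g j)" unfolding g_def
      by (subst sum.reindex) (auto intro: inj_on_subset[OF inj_px])
    finally have e: "(\<Sum>j\<in>J. g j) = enc (px ` J)" by simp
    have GA: "px ` J \<in> GG" using J chain_px[of x J] by (simp add: GG_def px_def[abs_def])
    then have "good (enc (px ` J))" by (auto simp: good_def)
    then have y1: "yC f (\<Sum>j\<in>J. g j) = f (ext (longest (px ` J)))"
      using decA_eq[OF GA] e by (simp add: yC_def)
    have L: "longest (px ` J) \<in> px ` J \<and> (\<forall>t\<in>px ` J. length t \<le> length (longest (px ` J)))"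
      using J by (intro longest) auto
    then obtain j0 where j0: "j0 \<in> J" "longest (px ` J) = px j0" by auto
    have "\<forall>j\<in>J. j \<le> j0" using L j0 lpx by auto
    then have "j0 = Max J" using j0 J by (intro Max_eqI[symmetric]) auto
    then show ?thesis using y1 j0 by simp
  qed
  have "finite {n \<in> FS (range g). yC f n \<notin> U}" if U: "open U" "f x \<in> U" for U
  proof -
    obtain N where N: "\<forall>z. agree z x N \<longrightarrow> f z \<in> U" using continuous_cyl[OF cont U] by blast
    have "{n \<in> FS (range g). yC f n \<notin> U} \<subseteq> sum (\<lambda>a. a) ` Pow (g ` {..<N})"
    proof
      fix n assume "n \<in> {n \<in> FS (range g). yC f n \<notin> U}"
      then have n: "n \<in> FS (range g)" "yC f n \<notin> U" by auto
      obtain \<alpha>' where \<alpha>': "n = \<Sum>\<alpha>'" "\<alpha>' \<subseteq> range g" "finite \<alpha>'" "\<alpha>' \<noteq> {}"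
        using n(1) by (auto simp: FS_def)
      define J where "J = g -` \<alpha>'"
      have img: "g ` J = \<alpha>'" using \<alpha>'(2) by (auto simp: J_def)
      have fJ: "finite J" using \<alpha>'(3) inj_g by (simp add: J_def finite_vimageI)
      have nJ: "J \<noteq> {}" using img \<alpha>'(4) by auto
      have "\<Sum>(g ` J) = (\<Sum>j\<in>J. g j)"
        by (subst sum.reindex) (auto intro: inj_on_subset[OF inj_g])
      then have nsum: "n = (\<Sum>j\<in>J. g j)" using \<alpha>'(1) img by simp
      have "J \<subseteq> {..<N}"
      proof (rule ccontr)
        assume "\<not> J \<subseteq> {..<N}"
        then obtain j where "j \<in> J" "N \<le> j" by (auto simp: subset_iff not_less)
        then have "N \<le> Max J" using fJ by (meson Max_ge order_trans)
        then have "agree (ext (px (Max J))) x N"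
          by (intro ext_agree) (auto simp: lpx px_def)
        then have "yC f n \<in> U" using N val[OF fJ nJ] nsum by simp
        then show False using n(2) by simp
      qed
      then have "\<alpha>' \<in> Pow (g ` {..<N})" using img by auto
      then show "n \<in> sum (\<lambda>a. a) ` Pow (g ` {..<N})" using \<alpha>'(1) by blast
    qed
    then show ?thesis by (rule finite_subset) auto
  qed
  then show ?thesis unfolding H_char using infD by blast
qed


lemma FS_single: "d \<in> S \<Longrightarrow> d \<in> FS S"
  using FS_I[of "{d}" S] by simp

lemma FS_pair: "d \<in> S \<Longrightarrow> d' \<in> S \<Longrightarrow> d \<noteq> d' \<Longrightarrow> d + d' \<in> FS S"
  using FS_I[of "{d, d'}" S] by simp

lemma FS_sub:
  fixes f :: "(nat \<Rightarrow> nat) \<Rightarrow> 'a::t2_space"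
  assumes cont: "continuous_on UNIV f"
  shows "FS_limits (yC f) \<subseteq> range f"
proof
  fix \<eta> assume "\<eta> \<in> FS_limits (yC f)"
  then obtain D where D: "infinite D"
    and conv: "\<And>U. open U \<Longrightarrow> \<eta> \<in> U \<Longrightarrow> \<exists>K. finite K \<and> (\<forall>n\<in>FS (D - K). yC f n \<in> U)"
    unfolding FS_limits_def by blast
  show "\<eta> \<in> range f"
  proof (cases "\<exists>K. finite K \<and> (\<forall>n\<in>FS (D - K). good n)")
    case False
    show ?thesis
    proof (rule ccontr)
      assume "\<eta> \<notin> range f"
      then have "\<eta> \<noteq> f (\<lambda>_. 0)" by auto
      then have "open (- {f (\<lambda>_. 0)})" "\<eta> \<in> - {f (\<lambda>_. 0)}" by auto
      then obtain K where K: "finite K" "\<forall>n\<in>FS (D - K). yC f n \<in> - {f (\<lambda>_. 0)}"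
        using conv by blast
      then obtain n where "n \<in> FS (D - K)" "\<not> good n" using False by blast
      then show False using K(2) by (auto simp: yC_def)
    qed
  next
    case True
    then obtain K where K: "finite K" "\<forall>n\<in>FS (D - K). good n" by blast
    define D' where "D' = D - K"
    have infD': "infinite D'" using D K(1) by (simp add: D'_def)
    define A where "A d = decA d" for d
    have Ad: "A d \<in> GG \<and> enc (A d) = d" if "d \<in> D'" for d
      using decA[of d] K(2) FS_single[OF that] by (simp add: A_def D'_def)
    have fA: "finite (A d)" "A d \<noteq> {}" "chainL (A d)" if "d \<in> D'" for d
      using Ad[OF that] by (auto simp: GG_def)
    have dc: "A d \<inter> A d' = {} \<and> chainL (A d \<union> A d')" if "d \<in> D'" "d' \<in> D'" "d \<noteq> d'" for d d'
    proof -
      have "good (d + d')" using K(2) FS_pair[OF that] by (simp add: D'_def)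
      then obtain C where C: "C \<in> GG" "enc C = d + d'" by (auto simp: good_def)
      then have e: "enc (A d) + enc (A d') = enc C" using Ad[OF that(1)] Ad[OF that(2)] by simp
      have fC: "finite C" using C by (simp add: GG_def)
      have dis: "A d \<inter> A d' = {}" using enc_carry[OF fA(1)[OF that(1)] fA(1)[OF that(2)] fC e] .
      have "enc (A d \<union> A d') = enc C" using enc_union[OF fA(1)[OF that(1)] fA(1)[OF that(2)] dis] e by simp
      then have "A d \<union> A d' = C" using fA(1)[OF that(1)] fA(1)[OF that(2)] fC by (intro enc_inj) auto
      then show ?thesis using dis C(1) by (simp add: GG_def)
    qed
    define U where "U = \<Union>(A ` D')"
    have chU: "chainL U"
      unfolding chainL_def
    proof (intro ballI)
      fix s t assume "s \<in> U" "t \<in> U"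
      then obtain d d' where dd: "d \<in> D'" "d' \<in> D'" "s \<in> A d" "t \<in> A d'" by (auto simp: U_def)
      show "pre s t \<or> pre t s"
      proof (cases "d = d'")
        case True
        then show ?thesis using fA(3)[OF dd(1)] dd by (auto simp: chainL_def)
      next
        case False
        then have "chainL (A d \<union> A d')" using dc[OF dd(1,2)] by simp
        then show ?thesis using dd(3,4) unfolding chainL_def by blast
      qed
    qed
    have injA: "inj_on A D'"
    proof (rule inj_onI)
      fix d d' assume a: "d \<in> D'" "d' \<in> D'" "A d = A d'"
      have "d = enc (A d)" using Ad[OF a(1)] by simp
      also have "\<dots> = enc (A d')" using a(3) by simp
      also have "\<dots> = d'" using Ad[OF a(2)] by simp
      finally show "d = d'" .
    qed
    have infU: "infinite U"
    proof
      assume "finite U"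
      moreover have "A ` D' \<subseteq> Pow U" by (auto simp: U_def)
      ultimately have "finite D'" using inj_on_finite[OF injA] by blast
      then show False using infD' by simp
    qed
    obtain x where x: "\<forall>s\<in>U. s = map x [0..<length s]" using chain_branch[OF chU infU] by blast
    have short: "finite {d\<in>D'. length (longest (A d)) < N}" for N
    proof -
      have inj: "inj_on A {d\<in>D'. length (longest (A d)) < N}" by (rule inj_on_subset[OF injA]) auto
      have "A ` {d\<in>D'. length (longest (A d)) < N} \<subseteq> Pow {s\<in>U. length s < N}"
      proof
        fix B assume "B \<in> A ` {d\<in>D'. length (longest (A d)) < N}"
        then obtain d where d: "d \<in> D'" "length (longest (A d)) < N" "B = A d" by auto
        have "\<forall>t\<in>A d. length t \<le> length (longest (A d))" using longest[OF fA(1,2)[OF d(1)]] by blast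
        then show "B \<in> Pow {s\<in>U. length s < N}" using d by (auto simp: U_def)
      qed
      moreover have "finite (Pow {s\<in>U. length s < N})" using chain_finite_short[OF chU] by simp
      ultimately show ?thesis using inj_on_finite[OF inj] by blast
    qed
    show "\<eta> \<in> range f"
    proof (rule ccontr)
      assume "\<eta> \<notin> range f"
      then have "\<eta> \<noteq> f x" by auto
      then obtain V1 V2 where V: "open V1" "open V2" "\<eta> \<in> V1" "f x \<in> V2" "V1 \<inter> V2 = {}"
        using hausdorff[OF \<open>\<eta> \<noteq> f x\<close>] by auto
      obtain K1 where K1: "finite K1" "\<forall>n\<in>FS (D - K1). yC f n \<in> V1" using conv[OF V(1,3)] by blast
      obtain N where N: "\<forall>z. agree z x N \<longrightarrow> f z \<in> V2" using continuous_cyl[OF cont V(2,4)] by blast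
      have "infinite (D' - K1 - {d\<in>D'. length (longest (A d)) < N})"
        using infD' K1(1) short[of N] by simp
      then have "D' - K1 - {d\<in>D'. length (longest (A d)) < N} \<noteq> {}" by (rule infinite_imp_nonempty)
      then obtain d where "d \<in> D' - K1 - {d\<in>D'. length (longest (A d)) < N}" by blast
      then have d: "d \<in> D'" "d \<notin> K1" "\<not> length (longest (A d)) < N" by auto
      have "d \<in> FS (D - K1)" using d by (intro FS_single) (auto simp: D'_def)
      then have in1: "yC f d \<in> V1" using K1(2) by blast
      have "good d" using K(2) FS_single[OF d(1)] by (simp add: D'_def)
      then have yd: "yC f d = f (ext (longest (A d)))" by (simp add: yC_def A_def)
      have "longest (A d) \<in> U" using longest[OF fA(1,2)[OF d(1)]] d(1) by (auto simp: U_def)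
      then have "agree (ext (longest (A d))) x N" using x d(3) by (intro ext_agree) auto
      then have "yC f d \<in> V2" using N yd by simp
      then show False using V(5) in1 by blast
    qed
  qed
qed


theorem theorem4p3:
  assumes "uncountable (UNIV :: 'a::polish_space set)"
  shows "(L_FS :: 'a set set) = Sigma11 \<and> (L_H :: 'a set set) = Sigma11 \<and>
         (\<forall>C :: 'a set. analytic_set C \<and> C \<noteq> {} \<longrightarrow>
            (\<exists>y. C = FS_limits y \<and> C = H_limits y))"
proof -
  have third: "\<forall>C :: 'a set. analytic_set C \<and> C \<noteq> {} \<longrightarrow> (\<exists>y. C = FS_limits y \<and> C = H_limits y)"
  proof (intro allI impI)
    fix C :: "'a set" assume "analytic_set C \<and> C \<noteq> {}"
    then obtain f :: "(nat \<Rightarrow> nat) \<Rightarrow> 'a" where f: "continuous_on UNIV f" "f ` UNIV = C"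
      by (auto simp: analytic_set_def)
    have 1: "C \<subseteq> H_limits (yC f)" using branch_H[OF f(1)] f(2) by auto
    have 2: "H_limits (yC f) \<subseteq> FS_limits (yC f)" by (rule H_sub_FS)
    have 3: "FS_limits (yC f) \<subseteq> C" using FS_sub[OF f(1)] f(2) by simp
    show "\<exists>y. C = FS_limits y \<and> C = H_limits y" using 1 2 3 by blast
  qed
  have e: "analytic_set ({} :: 'a set)" by (simp add: analytic_set_def)
  have a1: "(L_FS :: 'a set set) = Sigma11"
  proof
    show "(L_FS :: 'a set set) \<subseteq> Sigma11"
      using e FS_limits_analytic by (auto simp: L_FS_def Sigma11_def)
    show "Sigma11 \<subseteq> (L_FS :: 'a set set)"
    proof
      fix A :: "'a set" assume "A \<in> Sigma11"
      then have "analytic_set A" by (simp add: Sigma11_def)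
      then show "A \<in> L_FS" using third by (cases "A = {}") (auto simp: L_FS_def)
    qed
  qed
  have a2: "(L_H :: 'a set set) = Sigma11"
  proof
    show "(L_H :: 'a set set) \<subseteq> Sigma11"
      using e H_limits_analytic by (auto simp: L_H_def Sigma11_def)
    show "Sigma11 \<subseteq> (L_H :: 'a set set)"
    proof
      fix A :: "'a set" assume "A \<in> Sigma11"
      then have "analytic_set A" by (simp add: Sigma11_def)
      then show "A \<in> L_H" using third by (cases "A = {}") (auto simp: L_H_def)
    qed
  qed
  show ?thesis using a1 a2 third by blast
qed

end
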